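(* For $0<|q|<1$, the sequences $$\alpha_n=\frac{(-1)^n\left(q^{(-n^2+n+4)/2}(1-q^n)+q^{-n(n+5)/2}(1-q^{n+1})\right)}{1-q},\qquad\beta_n=\frac{(-1)^nq^{-n(n+5)/2}}{(q;q)_n}\qquad(n\ge0)$$ form a Bailey pair relative to $a=q$, i.e. $\beta_n=\sum_{r=0}^n\frac{\alpha_r}{(q;q)_{n-r}(q^2;q)_{n+r}}$ for all $n\ge0$.
   Context: $(a;q)_n=\prod_{k=0}^{n-1}(1-aq^k)$ with $(a;q)_0=1$. A Bailey pair relative to $a$ is a pair of sequences with $\beta_n=\sum_{r=0}^n\frac{\alpha_r}{(q;q)_{n-r}(aq;q)_{n+r}}$ for all $n\ge0$. *)

theory Defs
  imports "HOL-Analysis.Analysis"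
begin

definition qpoch :: "complex \<Rightarrow> complex \<Rightarrow> nat \<Rightarrow> complex" where
  "qpoch a q n = (\<Prod>k<n. 1 - a * q ^ k)"

definition bailey_pair :: "complex \<Rightarrow> complex \<Rightarrow> (nat \<Rightarrow> complex) \<Rightarrow> (nat \<Rightarrow> complex) \<Rightarrow> bool" where
  "bailey_pair q a \<alpha> \<beta> \<longleftrightarrow>
     (\<forall>n. \<beta> n = (\<Sum>r\<le>n. \<alpha> r / (qpoch q q (n - r) * qpoch (a * q) q (n + r))))"

end

theory Submission
  imports Defs
begin

definition Nt :: "complex \<Rightarrow> complex \<Rightarrow> complex \<Rightarrow> complex" where
 "Nt q x y = y*(1-(q+q^2)*y+(q^2+q^3)*y^2-q^3*y^3) - q*x + (q^3+q^2)*x*y - (q^4+q^2)*x*y^2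
   + q^3*x*y^3 + q^3*(1-q)*x^2*y - q^4*(1-q)*x^2*y^2"

lemma alg1:
  fixes q x pn a b :: complex
  assumes "q \<noteq> 0" "x \<noteq> 0" "pn \<noteq> 0" "a \<noteq> 0" "b \<noteq> 0"
    and ha: "a = 1 - q*x" and hb: "b = 1 - q^2*x"
  shows "(1-q) / ((pn*a) * (pn*a*b))
     - (-1/(q^3*x*a)) * ((1-q) / (pn * (pn*a)))
     = Nt q x 1 / (q^3*x*1*a*(pn*a)*(pn*a*b))"
  using assms(1-5) apply (simp add: field_simps)
  unfolding ha hb Nt_def by (simp add: eval_nat_numeral algebra_simps)

lemma alg2:
  fixes q y z pm pL wk s a1 a2 e d :: complex
  assumes "q \<noteq> 0" "y \<noteq> 0" "z \<noteq> 0" "pm \<noteq> 0" "pL \<noteq> 0" "a1 \<noteq> 0" "a2 \<noteq> 0" "e \<noteq> 0" "d \<noteq> 0"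
    and h1: "a1 = 1 - q*z" and h2: "a2 = 1 - q^2*z" and he: "e = 1 - q^4*y^2*z" and hd: "d = 1 - q^2*y*z"
  shows "(- s) * (1 - q^2*y + q^5*y^3*(1-q*y)) * (wk/(q^3*y)) / ((pm*a1)*(pL*e))
     - (-1/(q^3*(q*y*z)*d)) * ((- s) * (1 - q^2*y + q^5*y^3*(1-q*y)) * (wk/(q^3*y)) / (pm*pL))
     = (- s) * (wk/(q^3*y)) * Nt q (q*y*z) (q*y) / (q^3*(q*y*z)*(q*y)*d*(pm*a1)*(pL*e))
     - s * wk * Nt q (q*y*z) y / (q^3*(q*y*z)*y*d*(pm*a1*a2)*pL)"
  using assms(1-9) apply (simp add: field_simps)
  unfolding h1 h2 he hd Nt_def by algebra

lemma alg3:
  fixes q x pL wn s e d :: complex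
  assumes "q \<noteq> 0" "x \<noteq> 0" "pL \<noteq> 0" "1 - q \<noteq> 0" "e \<noteq> 0" "d \<noteq> 0"
    and he: "e = 1 - q^3*x^2" and hd: "d = 1 - q*x"
  shows "s * wn * Nt q x x / (q^3*x*x*d*(1-q)*pL)
     = - ((- s) * (1 - q^2*x + q^5*x^3*(1-q*x)) * (wn/(q^3*x)) / (1 * (pL*e)))"
  using assms(1-6) apply (simp add: field_simps)
  unfolding he hd Nt_def by algebra


definition br :: "complex \<Rightarrow> nat \<Rightarrow> complex" where
  "br q r = (1 - q^(r+1)) + q^(3*r+2)*(1-q^r)"

definition ww :: "complex \<Rightarrow> nat \<Rightarrow> complex" where
  "ww q r = inverse (q ^ (r*(r+5) div 2))"

definition ff :: "complex \<Rightarrow> nat \<Rightarrow> nat \<Rightarrow> complex" where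
  "ff q n r = (-1)^r * br q r * ww q r / (qpoch q q (n-r) * qpoch q q (n+r+1))"

definition gg :: "complex \<Rightarrow> nat \<Rightarrow> nat \<Rightarrow> complex" where
  "gg q n k = (-1)^k * ww q k * Nt q (q^n) (q^k) /
     (q^3*q^n*q^k*(1-q*q^n)*qpoch q q (n+1-k)*qpoch q q (n+k+2))"

lemma qpoch_Suc: "qpoch q q (Suc m) = qpoch q q m * (1 - q^(Suc m))"
  unfolding qpoch_def by (simp add: prod.lessThan_Suc)

lemma qpoch_0: "qpoch q q 0 = 1" unfolding qpoch_def by simp

lemma qpoch_1: "qpoch q q 1 = 1 - q" unfolding qpoch_def by simp

lemma qpoch_1': "qpoch q q (Suc 0) = 1 - q" unfolding qpoch_def by simp

lemma pow_ne1:
  fixes q :: complex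
  assumes "norm q < 1" "0 < j"
  shows "1 - q^j \<noteq> 0"
proof
  assume "1 - q^j = 0"
  hence "q^j = 1" by simp
  hence "norm q ^ j = 1" by (metis norm_one norm_power)
  moreover have "norm q ^ j < 1"
    using assms by (simp add: power_less_one_iff)
  ultimately show False by simp
qed

lemma qpoch_nz:
  fixes q :: complex
  assumes "norm q < 1"
  shows "qpoch q q m \<noteq> 0"
proof (induction m)
  case 0 then show ?case by (simp add: qpoch_0)
next
  case (Suc m) then show ?case
    using pow_ne1[OF assms, of "Suc m"] by (simp add: qpoch_Suc del: power_Suc)
qed

lemma exp_Suc: "(Suc k * (Suc k + 5)) div 2 = k*(k+5) div 2 + (k+3)"
proof -
  have "Suc k * (Suc k + 5) = k*(k+5) + (k+3)*2" by (simp add: algebra_simps)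
  then show ?thesis by simp
qed

lemma ww_0: "ww q 0 = 1" unfolding ww_def by simp

lemma ww_Suc:
  fixes q :: complex
  assumes "q \<noteq> 0"
  shows "ww q (Suc k) = ww q k / (q^3*q^k)"
  unfolding ww_def exp_Suc using assms
  by (simp add: power_add field_simps)

lemma tele:
  fixes q :: complex
  assumes q0: "q \<noteq> 0" and q1: "norm q < 1" and kn: "k \<le> n"
  shows "(\<Sum>r\<le>k. ff q (n+1) r - (-1/(q^3*q^n*(1-q*q^n))) * ff q n r) = gg q n k"
  using kn
proof (induction k)
  case 0
  define pn where "pn = qpoch q q n"
  define x where "x = q^n"
  define a where "a = 1 - q*x"
  define b where "b = 1 - q^2*x"
  have pn0: "pn \<noteq> 0" unfolding pn_def using qpoch_nz[OF q1] .
  have x0: "x \<noteq> 0" unfolding x_def using q0 by simp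
  have a0: "a \<noteq> 0" unfolding a_def x_def using pow_ne1[OF q1, of "Suc n"] by simp
  have b0: "b \<noteq> 0" unfolding b_def x_def using pow_ne1[OF q1, of "Suc (Suc n)"] by (simp add: power2_eq_square mult.assoc)
  have P1: "qpoch q q (n+1) = pn*a" unfolding pn_def a_def x_def by (simp add: qpoch_Suc)
  have P2: "qpoch q q (n+2) = pn*a*b" unfolding pn_def a_def b_def x_def
    by (simp add: qpoch_Suc power2_eq_square)
  have E1: "ff q (n+1) 0 = (1-q) / ((pn*a) * (pn*a*b))"
    unfolding ff_def using P1 P2 by (simp add: br_def ww_0 numeral_2_eq_2)
  have E2: "ff q n 0 = (1-q) / (pn * (pn*a))"
    unfolding ff_def using P1 by (simp add: br_def ww_0 pn_def)
  have E3: "gg q n 0 = Nt q x 1 / (q^3*x*1*a*(pn*a)*(pn*a*b))"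
    unfolding gg_def using P1 P2 by (simp add: ww_0 x_def a_def numeral_2_eq_2)
  have "ff q (n+1) 0 - (-1/(q^3*q^n*(1-q*q^n))) * ff q n 0 = gg q n 0"
    unfolding E1 E2 E3 x_def[symmetric] a_def[symmetric]
    by (rule alg1[OF q0 x0 pn0 a0 b0 a_def b_def])
  then show ?case by simp
next
  case (Suc k)
  then have kn': "k \<le> n" and IH: "(\<Sum>r\<le>k. ff q (n+1) r - (-1/(q^3*q^n*(1-q*q^n))) * ff q n r) = gg q n k"
    by auto
  define m where "m = n - Suc k"
  have nm: "n = m + k + 1" unfolding m_def using Suc.prems by simp
  define y where "y = q^k"
  define z where "z = q^m"
  define pm where "pm = qpoch q q m"
  define pL where "pL = qpoch q q (n+k+2)"
  define wk where "wk = ww q k"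
  define s where "s = ((-1)^k :: complex)"
  define a1 where "a1 = 1 - q*z"
  define a2 where "a2 = 1 - q^2*z"
  define e where "e = 1 - q^4*y^2*z"
  define d where "d = 1 - q^2*y*z"
  have y0: "y \<noteq> 0" unfolding y_def using q0 by simp
  have z0: "z \<noteq> 0" unfolding z_def using q0 by simp
  have pm0: "pm \<noteq> 0" unfolding pm_def using qpoch_nz[OF q1] .
  have pL0: "pL \<noteq> 0" unfolding pL_def using qpoch_nz[OF q1] .
  have a10: "a1 \<noteq> 0" unfolding a1_def z_def using pow_ne1[OF q1, of "Suc m"] by simp
  have a20: "a2 \<noteq> 0" unfolding a2_def z_def using pow_ne1[OF q1, of "Suc (Suc m)"] by (simp add: power2_eq_square mult.assoc)
  have qe: "q^(n+k+3) = q^4*y^2*z" unfolding nm y_def z_def by (simp add: power_add power2_eq_square power_mult_distrib algebra_simps eval_nat_numeral)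
  have qd: "q*q^n = q^2*y*z" unfolding nm y_def z_def by (simp add: power_add power2_eq_square)
  have qn: "q^n = q*y*z" unfolding nm y_def z_def by (simp add: power_add)
  have e0: "e \<noteq> 0" unfolding e_def using pow_ne1[OF q1, of "n+k+3"] qe by simp
  have d0: "d \<noteq> 0" unfolding d_def using pow_ne1[OF q1, of "Suc n"] qd by simp
  have Pm1: "qpoch q q (n+1-(k+1)) = pm*a1" unfolding nm pm_def a1_def z_def by (simp add: qpoch_Suc)
  have Pm2: "qpoch q q (n+1-k) = pm*a1*a2" unfolding nm pm_def a1_def a2_def z_def
    by (simp add: qpoch_Suc Suc_diff_le power2_eq_square)
  have Pm0: "qpoch q q (n-(k+1)) = pm" unfolding nm pm_def by simp
  have PL0: "qpoch q q (n+(k+1)+1) = pL" unfolding pL_def by simp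
  have PL1: "qpoch q q (n+1+(k+1)+1) = pL*e" unfolding pL_def e_def
    using qpoch_Suc[of q "n+k+2"] qe by (simp add: numeral_3_eq_3)
  have PL2: "qpoch q q (n+k+2) = pL" unfolding pL_def ..
  have brS: "br q (k+1) = 1 - q^2*y + q^5*y^3*(1-q*y)" unfolding br_def y_def
    by (simp add: power_add power_mult_distrib algebra_simps eval_nat_numeral)
  have wS: "ww q (k+1) = wk/(q^3*y)" unfolding wk_def y_def using ww_Suc[OF q0] by simp
  have sS: "((-1)^(k+1) :: complex) = - s" unfolding s_def by simp
  have E1: "ff q (n+1) (k+1) = (- s) * (1 - q^2*y + q^5*y^3*(1-q*y)) * (wk/(q^3*y)) / ((pm*a1)*(pL*e))"
    unfolding ff_def Pm1 PL1 brS wS sS by simp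
  have E2: "ff q n (k+1) = (- s) * (1 - q^2*y + q^5*y^3*(1-q*y)) * (wk/(q^3*y)) / (pm*pL)"
    unfolding ff_def Pm0 PL0 brS wS sS by simp
  have E3: "gg q n (k+1) = (- s) * (wk/(q^3*y)) * Nt q (q*y*z) (q*y) / (q^3*(q*y*z)*(q*y)*d*(pm*a1)*(pL*e))"
    unfolding gg_def wS sS using Pm1 PL1 qn qd by (simp add: d_def y_def)
  have E4: "gg q n k = s * wk * Nt q (q*y*z) y / (q^3*(q*y*z)*y*d*(pm*a1*a2)*pL)"
    unfolding gg_def Pm2 PL2 using qn qd by (simp add: d_def y_def s_def wk_def)
  have Ec: "(-1/(q^3*q^n*(1-q*q^n))) = (-1/(q^3*(q*y*z)*d))"
    unfolding d_def qn[symmetric] qd[symmetric] ..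
  have step: "ff q (n+1) (k+1) - (-1/(q^3*q^n*(1-q*q^n))) * ff q n (k+1) = gg q n (k+1) - gg q n k"
    unfolding E1 E2 E3 E4 Ec
    by (rule alg2[OF q0 y0 z0 pm0 pL0 a10 a20 e0 d0 a1_def a2_def e_def d_def])
  show ?case using IH step by simp
qed


lemma last0:
  fixes q :: complex
  assumes q0: "q \<noteq> 0" and q1: "norm q < 1"
  shows "gg q n n + ff q (n+1) (n+1) = 0"
proof -
  define x where "x = q^n"
  define pL where "pL = qpoch q q (n+n+2)"
  define e where "e = 1 - q^3*x^2"
  define d where "d = 1 - q*x"
  have x0: "x \<noteq> 0" unfolding x_def using q0 by simp
  have pL0: "pL \<noteq> 0" unfolding pL_def using qpoch_nz[OF q1] .
  have q10: "1 - q \<noteq> 0" using pow_ne1[OF q1, of 1] by simp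
  have qe: "q^(n+n+3) = q^3*x^2" unfolding x_def
    by (simp only: power_add power2_eq_square) (simp add: mult_ac)
  have e0: "e \<noteq> 0" unfolding e_def using pow_ne1[OF q1, of "n+n+3"] qe by simp
  have d0: "d \<noteq> 0" unfolding d_def x_def using pow_ne1[OF q1, of "Suc n"] by simp
  have PL1: "qpoch q q (n+1+(n+1)+1) = pL*e" unfolding pL_def e_def
    using qpoch_Suc[of q "n+n+2"] qe by (simp add: numeral_3_eq_3)
  have brS: "br q (n+1) = 1 - q^2*x + q^5*x^3*(1-q*x)" unfolding br_def x_def
    by (simp add: power_add power_mult_distrib algebra_simps eval_nat_numeral)
  have wS: "ww q (n+1) = ww q n/(q^3*x)" unfolding x_def using ww_Suc[OF q0] by simp
  have E1: "gg q n n = (-1)^n * ww q n * Nt q x x / (q^3*x*x*d*(1-q)*pL)"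
    unfolding gg_def pL_def d_def x_def by (simp add: qpoch_1 qpoch_1')
  have E2: "ff q (n+1) (n+1) = (- ((-1)^n)) * (1 - q^2*x + q^5*x^3*(1-q*x)) * (ww q n/(q^3*x)) / (1 * (pL*e))"
    unfolding ff_def PL1 brS wS by (simp add: qpoch_0)
  show ?thesis unfolding E1 E2
    using alg3[OF q0 x0 pL0 q10 e0 d0 e_def d_def, of "(-1)^n" "ww q n"] by simp
qed

lemma mainsum:
  fixes q :: complex
  assumes q0: "q \<noteq> 0" and q1: "norm q < 1"
  shows "(\<Sum>r\<le>n. ff q n r) = (-1)^n * ww q n / qpoch q q n"
proof (induction n)
  case 0
  have q10: "1 - q \<noteq> 0" using pow_ne1[OF q1, of 1] by simp
  show ?case using q10 by (simp add: ff_def br_def ww_0 qpoch_def)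
next
  case (Suc n)
  define c where "c = (-1/(q^3*q^n*(1-q*q^n)))"
  have T: "(\<Sum>r\<le>n. ff q (n+1) r - c * ff q n r) = gg q n n"
    unfolding c_def by (rule tele[OF q0 q1 order_refl])
  have "(\<Sum>r\<le>Suc n. ff q (Suc n) r) = (\<Sum>r\<le>n. ff q (n+1) r) + ff q (n+1) (n+1)"
    by simp
  also have "(\<Sum>r\<le>n. ff q (n+1) r) = gg q n n + c * (\<Sum>r\<le>n. ff q n r)"
  proof -
    have "(\<Sum>r\<le>n. ff q (n+1) r - c * ff q n r) = (\<Sum>r\<le>n. ff q (n+1) r) - c * (\<Sum>r\<le>n. ff q n r)"
      by (simp add: sum_subtractf sum_distrib_left)
    with T show ?thesis by (simp add: algebra_simps)
  qed
  also have "gg q n n + c * (\<Sum>r\<le>n. ff q n r) + ff q (n+1) (n+1) = c * (\<Sum>r\<le>n. ff q n r)"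
    using last0[OF q0 q1, of n] by (simp add: algebra_simps)
  also have "\<dots> = (-1)^(Suc n) * ww q (Suc n) / qpoch q q (Suc n)"
    unfolding Suc.IH c_def using q0 pow_ne1[OF q1, of "Suc n"] qpoch_nz[OF q1, of n]
    by (simp add: ww_Suc[OF q0] qpoch_Suc field_simps)
  finally show ?case .
qed

lemma qpoch_shift:
  fixes q :: complex
  shows "qpoch (q*q) q j * (1-q) = qpoch q q (Suc j)"
  unfolding qpoch_def by (simp add: prod.lessThan_Suc_shift mult.assoc del: prod.lessThan_Suc)

lemma even_ex: "\<exists>t. r*(r+5) = 2*(t::nat)"
proof -
  have "even (r*(r+5))" by auto
  then show ?thesis by (metis dvd_def)
qed

lemma powi1:
  fixes q :: complex
  shows "q powi (- (int r * (int r + 5)) div 2) = ww q r"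
proof -
  obtain t where t: "r*(r+5) = 2*t" using even_ex by blast
  have "int r * (int r + 5) = 2 * int t" using arg_cong[OF t, of int] by simp
  then have "- (int r * (int r + 5)) div 2 = - int t" by simp
  moreover have "r*(r+5) div 2 = t" using t by simp
  ultimately show ?thesis unfolding ww_def by (simp add: power_int_minus)
qed

lemma powi2:
  fixes q :: complex
  assumes "q \<noteq> 0"
  shows "q powi ((4 + int r - int r * int r) div 2) = q^(3*r+2) * ww q r"
proof -
  obtain t where t: "r*(r+5) = 2*t" using even_ex by blast
  have "int r * (int r + 5) = 2 * int t" using arg_cong[OF t, of int] by simp
  then have "4 + int r - int r * int r = 2 * (int (3*r+2) - int t)" by (simp add: algebra_simps)
  then have "(4 + int r - int r * int r) div 2 = int (3*r+2) - int t" by simp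
  moreover have "r*(r+5) div 2 = t" using t by simp
  moreover have "q powi (int (3*r+2) - int t) = q^(3*r+2) / q^t"
  proof -
    have "q powi (int (3*r+2) - int t) = q powi (int (3*r+2)) / q powi (int t)"
      by (rule power_int_diff) (use assms in simp)
    also have "\<dots> = q^(3*r+2) / q^t" by (simp only: power_int_of_nat)
    finally show ?thesis .
  qed
  ultimately show ?thesis unfolding ww_def by (simp add: divide_inverse)
qed

theorem mainTheorem11:
  fixes q :: complex
  assumes "0 < norm q" and "norm q < 1"
  shows "bailey_pair q q
     (\<lambda>n. (-1) ^ n * (q powi ((4 + int n - int n * int n) div 2) * (1 - q ^ n)
                     + q powi (- (int n * (int n + 5)) div 2) * (1 - q ^ (n + 1))) / (1 - q))
     (\<lambda>n. (-1) ^ n * q powi (- (int n * (int n + 5)) div 2) / qpoch q q n)"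
proof -
  have q0: "q \<noteq> 0" using assms(1) by auto
  have q1: "norm q < 1" by fact
  have q10: "1 - q \<noteq> 0" using pow_ne1[OF q1, of 1] by simp
  show ?thesis
    unfolding bailey_pair_def
  proof
    fix n
    have hterm: "(-1) ^ r * (q powi ((4 + int r - int r * int r) div 2) * (1 - q ^ r)
                     + q powi (- (int r * (int r + 5)) div 2) * (1 - q ^ (r + 1))) / (1 - q)
          / (qpoch q q (n - r) * qpoch (q * q) q (n + r)) = ff q n r" if "r \<le> n" for r
    proof -
      have A: "(-1) ^ r * (q powi ((4 + int r - int r * int r) div 2) * (1 - q ^ r)
                     + q powi (- (int r * (int r + 5)) div 2) * (1 - q ^ (r + 1)))
            = (-1)^r * br q r * ww q r"
        unfolding powi1 powi2[OF q0] br_def by (simp add: algebra_simps)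
      have B: "qpoch (q * q) q (n + r) = qpoch q q (n+r+1) / (1-q)"
        using qpoch_shift[of q "n+r"] q10 by (simp add: field_simps)
      show ?thesis unfolding A B ff_def using q10 qpoch_nz[OF q1, of "n-r"] qpoch_nz[OF q1, of "n+r+1"]
        by (simp add: field_simps)
    qed
    show "(-1) ^ n * q powi (- (int n * (int n + 5)) div 2) / qpoch q q n =
      (\<Sum>r\<le>n. (-1) ^ r * (q powi ((4 + int r - int r * int r) div 2) * (1 - q ^ r)
                     + q powi (- (int r * (int r + 5)) div 2) * (1 - q ^ (r + 1))) / (1 - q)
          / (qpoch q q (n - r) * qpoch (q * q) q (n + r)))"
      using hterm mainsum[OF q0 q1, of n] by (simp add: powi1)
  qed
qed

end
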